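(* Let $k$ be a commutative artin ring, let $\Lambda$ be an artin $k$-algebra, let $X$ and $Y$ be finite length $\Lambda$-modules, and let $M\subseteq X\oplus Y$ be a submodule. Then there exist submodules $X'\subseteq X$ and $Y'\subseteq Y$ such that $M\leq_{\mathrm{deg}}X'\oplus Y'$.
   Context: For finite length $\Lambda$-modules $M,N$, one writes $M\leq_{\mathrm{deg}}N$ if there exist a finite length $\Lambda$-module $Z$ and a short exact sequence of $\Lambda$-modules $0\to Z\to M\oplus Z\to N\to 0$. *)

theory Defs
  imports "HOL-Algebra.Algebra"
begin

text \<open>Left modules over a (not necessarily commutative) ring R.  The library locale
  module requires a commutative ring, so we state the axioms for an arbitrary ring.\<close>
definition left_module :: "('r, 'c) ring_scheme \<Rightarrow> ('r, 'a) module \<Rightarrow> bool" where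
  "left_module R M \<longleftrightarrow> ring R \<and> abelian_group M \<and>
     (\<forall>a\<in>carrier R. \<forall>x\<in>carrier M. a \<odot>\<^bsub>M\<^esub> x \<in> carrier M) \<and>
     (\<forall>a\<in>carrier R. \<forall>b\<in>carrier R. \<forall>x\<in>carrier M.
        (a \<oplus>\<^bsub>R\<^esub> b) \<odot>\<^bsub>M\<^esub> x = a \<odot>\<^bsub>M\<^esub> x \<oplus>\<^bsub>M\<^esub> b \<odot>\<^bsub>M\<^esub> x) \<and>
     (\<forall>a\<in>carrier R. \<forall>x\<in>carrier M. \<forall>y\<in>carrier M.
        a \<odot>\<^bsub>M\<^esub> (x \<oplus>\<^bsub>M\<^esub> y) = a \<odot>\<^bsub>M\<^esub> x \<oplus>\<^bsub>M\<^esub> a \<odot>\<^bsub>M\<^esub> y) \<and>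
     (\<forall>a\<in>carrier R. \<forall>b\<in>carrier R. \<forall>x\<in>carrier M.
        (a \<otimes>\<^bsub>R\<^esub> b) \<odot>\<^bsub>M\<^esub> x = a \<odot>\<^bsub>M\<^esub> (b \<odot>\<^bsub>M\<^esub> x)) \<and>
     (\<forall>x\<in>carrier M. \<one>\<^bsub>R\<^esub> \<odot>\<^bsub>M\<^esub> x = x)"

text \<open>Submodules (as subsets of the carrier); the submodule as a module is M\<lparr>carrier := N\<rparr>.\<close>
definition lsubmodule :: "('r, 'c) ring_scheme \<Rightarrow> ('r, 'a) module \<Rightarrow> 'a set \<Rightarrow> bool" where
  "lsubmodule R M N \<longleftrightarrow> N \<subseteq> carrier M \<and> \<zero>\<^bsub>M\<^esub> \<in> N \<and>
     (\<forall>x\<in>N. \<forall>y\<in>N. x \<oplus>\<^bsub>M\<^esub> y \<in> N) \<and> (\<forall>x\<in>N. \<ominus>\<^bsub>M\<^esub> x \<in> N) \<and>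
     (\<forall>a\<in>carrier R. \<forall>x\<in>N. a \<odot>\<^bsub>M\<^esub> x \<in> N)"

definition fin_length :: "('r, 'c) ring_scheme \<Rightarrow> ('r, 'a) module \<Rightarrow> bool" where
  "fin_length R M \<longleftrightarrow> left_module R M \<and>
     (\<exists>n::nat. \<forall>(C :: nat \<Rightarrow> 'a set) (m::nat).
        (\<forall>i\<le>m. lsubmodule R M (C i)) \<and> (\<forall>i<m. C i \<subset> C (Suc i)) \<longrightarrow> m \<le> n)"

definition dsum :: "('r, 'a) module \<Rightarrow> ('r, 'b) module \<Rightarrow> ('r, 'a \<times> 'b) module" where
  "dsum M N = \<lparr>carrier = carrier M \<times> carrier N,
      monoid.mult = (\<lambda>_ _. undefined), one = undefined,
      ring.zero = (\<zero>\<^bsub>M\<^esub>, \<zero>\<^bsub>N\<^esub>),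
      ring.add = (\<lambda>x y. (fst x \<oplus>\<^bsub>M\<^esub> fst y, snd x \<oplus>\<^bsub>N\<^esub> snd y)),
      smult = (\<lambda>a x. (a \<odot>\<^bsub>M\<^esub> fst x, a \<odot>\<^bsub>N\<^esub> snd x))\<rparr>"

definition lmod_hom :: "('r, 'c) ring_scheme \<Rightarrow> ('r, 'a) module \<Rightarrow> ('r, 'b) module \<Rightarrow> ('a \<Rightarrow> 'b) \<Rightarrow> bool" where
  "lmod_hom R M N f \<longleftrightarrow> f \<in> carrier M \<rightarrow> carrier N \<and>
     (\<forall>x\<in>carrier M. \<forall>y\<in>carrier M. f (x \<oplus>\<^bsub>M\<^esub> y) = f x \<oplus>\<^bsub>N\<^esub> f y) \<and>
     (\<forall>a\<in>carrier R. \<forall>x\<in>carrier M. f (a \<odot>\<^bsub>M\<^esub> x) = a \<odot>\<^bsub>N\<^esub> f x)"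

text \<open>Degeneration order: M \<le>deg N iff there is a finite length module Z and a short exact
  sequence 0 \<rightarrow> Z \<rightarrow> M \<oplus> Z \<rightarrow> N \<rightarrow> 0.  Every finite length module over R is finitely
  generated, hence has cardinality at most that of (carrier R) lists, so it suffices
  (up to isomorphism) to let Z range over modules whose carrier lives in type 'r list.\<close>
definition deg_le :: "('r, 'c) ring_scheme \<Rightarrow> ('r, 'a) module \<Rightarrow> ('r, 'b) module \<Rightarrow> bool" where
  "deg_le R M N \<longleftrightarrow> (\<exists>(Z :: ('r, 'r list) module) f g.
     fin_length R Z \<and>
     lmod_hom R Z (dsum M Z) f \<and> inj_on f (carrier Z) \<and>
     lmod_hom R (dsum M Z) N g \<and> g ` carrier (dsum M Z) = carrier N \<and>
     f ` carrier Z = {w \<in> carrier (dsum M Z). g w = \<zero>\<^bsub>N\<^esub>})"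

definition artin_cring :: "'k ring \<Rightarrow> bool" where
  "artin_cring k \<longleftrightarrow> cring k \<and>
     (\<forall>I :: nat \<Rightarrow> 'k set. (\<forall>n. ideal (I n) k) \<and> (\<forall>n. I (Suc n) \<subseteq> I n) \<longrightarrow>
        (\<exists>m. \<forall>n\<ge>m. I n = I m))"

definition artin_algebra :: "'k ring \<Rightarrow> 'r ring \<Rightarrow> ('k \<Rightarrow> 'r) \<Rightarrow> bool" where
  "artin_algebra k L \<phi> \<longleftrightarrow> artin_cring k \<and> ring L \<and> \<phi> \<in> ring_hom k L \<and>
     (\<forall>a\<in>carrier k. \<forall>x\<in>carrier L. \<phi> a \<otimes>\<^bsub>L\<^esub> x = x \<otimes>\<^bsub>L\<^esub> \<phi> a) \<and>
     (\<exists>S. finite S \<and> S \<subseteq> carrier L \<and>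
        (\<forall>x\<in>carrier L. \<exists>c \<in> S \<rightarrow> carrier k. x = finsum L (\<lambda>s. \<phi> (c s) \<otimes>\<^bsub>L\<^esub> s) S))"

end

theory Submission imports Defs begin

lemma lm_ag: "left_module Rg Xm \<Longrightarrow> abelian_group Xm"
  by (simp add: left_module_def)
lemma lm_ring: "left_module Rg Xm \<Longrightarrow> ring Rg"
  by (simp add: left_module_def)
lemma lm_closed: "left_module Rg Xm \<Longrightarrow> a \<in> carrier Rg \<Longrightarrow> x \<in> carrier Xm \<Longrightarrow> a \<odot>\<^bsub>Xm\<^esub> x \<in> carrier Xm"
  by (simp add: left_module_def)
lemma lm_ldist: "left_module Rg Xm \<Longrightarrow> a \<in> carrier Rg \<Longrightarrow> b \<in> carrier Rg \<Longrightarrow> x \<in> carrier Xm \<Longrightarrow>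
   (a \<oplus>\<^bsub>Rg\<^esub> b) \<odot>\<^bsub>Xm\<^esub> x = a \<odot>\<^bsub>Xm\<^esub> x \<oplus>\<^bsub>Xm\<^esub> b \<odot>\<^bsub>Xm\<^esub> x"
  by (simp add: left_module_def)
lemma lm_rdist: "left_module Rg Xm \<Longrightarrow> a \<in> carrier Rg \<Longrightarrow> x \<in> carrier Xm \<Longrightarrow> y \<in> carrier Xm \<Longrightarrow>
   a \<odot>\<^bsub>Xm\<^esub> (x \<oplus>\<^bsub>Xm\<^esub> y) = a \<odot>\<^bsub>Xm\<^esub> x \<oplus>\<^bsub>Xm\<^esub> a \<odot>\<^bsub>Xm\<^esub> y"
  by (simp add: left_module_def)
lemma lm_assoc: "left_module Rg Xm \<Longrightarrow> a \<in> carrier Rg \<Longrightarrow> b \<in> carrier Rg \<Longrightarrow> x \<in> carrier Xm \<Longrightarrow>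
   (a \<otimes>\<^bsub>Rg\<^esub> b) \<odot>\<^bsub>Xm\<^esub> x = a \<odot>\<^bsub>Xm\<^esub> (b \<odot>\<^bsub>Xm\<^esub> x)"
  by (simp add: left_module_def)
lemma lm_one: "left_module Rg Xm \<Longrightarrow> x \<in> carrier Xm \<Longrightarrow> \<one>\<^bsub>Rg\<^esub> \<odot>\<^bsub>Xm\<^esub> x = x"
  by (simp add: left_module_def)

lemma lm_zero_smult: assumes "left_module Rg Xm" "x \<in> carrier Xm"
  shows "\<zero>\<^bsub>Rg\<^esub> \<odot>\<^bsub>Xm\<^esub> x = \<zero>\<^bsub>Xm\<^esub>"
proof -
  interpret Xm: abelian_group Xm using lm_ag[OF assms(1)] .
  interpret Rg: ring Rg using lm_ring[OF assms(1)] .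
  have c: "\<zero>\<^bsub>Rg\<^esub> \<odot>\<^bsub>Xm\<^esub> x \<in> carrier Xm" using lm_closed[OF assms(1)] assms by simp
  have "\<zero>\<^bsub>Rg\<^esub> \<odot>\<^bsub>Xm\<^esub> x \<oplus>\<^bsub>Xm\<^esub> \<zero>\<^bsub>Rg\<^esub> \<odot>\<^bsub>Xm\<^esub> x = \<zero>\<^bsub>Rg\<^esub> \<odot>\<^bsub>Xm\<^esub> x \<oplus>\<^bsub>Xm\<^esub> \<zero>\<^bsub>Xm\<^esub>"
    using lm_ldist[OF assms(1), of "\<zero>\<^bsub>Rg\<^esub>" "\<zero>\<^bsub>Rg\<^esub>" x] assms c by simp
  then show ?thesis using c Xm.add.l_cancel by (metis Xm.zero_closed)
qed

lemma lm_smult_zero: assumes "left_module Rg Xm" "a \<in> carrier Rg"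
  shows "a \<odot>\<^bsub>Xm\<^esub> \<zero>\<^bsub>Xm\<^esub> = \<zero>\<^bsub>Xm\<^esub>"
proof -
  interpret Xm: abelian_group Xm using lm_ag[OF assms(1)] .
  have c: "a \<odot>\<^bsub>Xm\<^esub> \<zero>\<^bsub>Xm\<^esub> \<in> carrier Xm" using lm_closed[OF assms(1)] assms by simp
  have "a \<odot>\<^bsub>Xm\<^esub> \<zero>\<^bsub>Xm\<^esub> \<oplus>\<^bsub>Xm\<^esub> a \<odot>\<^bsub>Xm\<^esub> \<zero>\<^bsub>Xm\<^esub> = a \<odot>\<^bsub>Xm\<^esub> \<zero>\<^bsub>Xm\<^esub> \<oplus>\<^bsub>Xm\<^esub> \<zero>\<^bsub>Xm\<^esub>"
    using lm_rdist[OF assms(1), of a "\<zero>\<^bsub>Xm\<^esub>" "\<zero>\<^bsub>Xm\<^esub>"] assms c by simp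
  then show ?thesis using c Xm.add.l_cancel by (metis Xm.zero_closed)
qed

lemma dsum_simps[simp]:
  "carrier (dsum M N) = carrier M \<times> carrier N"
  "\<zero>\<^bsub>dsum M N\<^esub> = (\<zero>\<^bsub>M\<^esub>, \<zero>\<^bsub>N\<^esub>)"
  "x \<oplus>\<^bsub>dsum M N\<^esub> y = (fst x \<oplus>\<^bsub>M\<^esub> fst y, snd x \<oplus>\<^bsub>N\<^esub> snd y)"
  "a \<odot>\<^bsub>dsum M N\<^esub> x = (a \<odot>\<^bsub>M\<^esub> fst x, a \<odot>\<^bsub>N\<^esub> snd x)"
  by (simp_all add: dsum_def)

lemma dsum_ag: assumes "abelian_group Xm" "abelian_group Ym" shows "abelian_group (dsum Xm Ym)"
proof -
  interpret Xm: abelian_group Xm by fact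
  interpret Ym: abelian_group Ym by fact
  show ?thesis
  proof (rule abelian_groupI, goal_cases)
    case (6 x) then show ?case
      by (intro bexI[of _ "(\<ominus>\<^bsub>Xm\<^esub> fst x, \<ominus>\<^bsub>Ym\<^esub> snd x)"]) (auto simp: Xm.l_neg Ym.l_neg)
  qed (auto simp: Xm.a_ac Ym.a_ac)
qed

lemma dsum_inv: assumes "abelian_group Xm" "abelian_group Ym" "x \<in> carrier Xm" "y \<in> carrier Ym"
  shows "\<ominus>\<^bsub>dsum Xm Ym\<^esub> (x, y) = (\<ominus>\<^bsub>Xm\<^esub> x, \<ominus>\<^bsub>Ym\<^esub> y)"
proof -
  interpret Xm: abelian_group Xm by fact
  interpret Ym: abelian_group Ym by fact
  interpret D: abelian_group "dsum Xm Ym" using dsum_ag assms by blast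
  show ?thesis using assms by (intro D.minus_equality) (auto simp: Xm.l_neg Ym.l_neg)
qed


fun lc :: "('r, 'a) module \<Rightarrow> 'r list \<Rightarrow> 'a list \<Rightarrow> 'a" where
  "lc Xm (a # as) (x # xs) = a \<odot>\<^bsub>Xm\<^esub> x \<oplus>\<^bsub>Xm\<^esub> lc Xm as xs"
| "lc Xm _ _ = \<zero>\<^bsub>Xm\<^esub>"

definition span :: "('r, 'c) ring_scheme \<Rightarrow> ('r, 'a) module \<Rightarrow> 'a list \<Rightarrow> 'a set" where
  "span Rg Xm xs = {lc Xm as xs | as. length as = length xs \<and> set as \<subseteq> carrier Rg}"

lemma lc_in_sub: assumes "left_module Rg Xm" "lsubmodule Rg Xm U" "set xs \<subseteq> U" "set as \<subseteq> carrier Rg"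
  shows "lc Xm as xs \<in> U"
  using assms(3,4)
proof (induction xs arbitrary: as)
  case Nil then show ?case using assms(2) by (cases as) (auto simp: lsubmodule_def)
next
  case (Cons x xs) then show ?case using assms(2) by (cases as) (auto simp: lsubmodule_def)
qed

lemma carrier_sub: assumes "left_module Rg Xm" shows "lsubmodule Rg Xm (carrier Xm)"
proof -
  interpret Xm: abelian_group Xm using lm_ag[OF assms(1)] .
  show ?thesis using lm_closed[OF assms] unfolding lsubmodule_def by auto
qed

lemma lc_zero: assumes "left_module Rg Xm" "set xs \<subseteq> carrier Xm" "set as \<subseteq> {\<zero>\<^bsub>Rg\<^esub>}"
  shows "lc Xm as xs = \<zero>\<^bsub>Xm\<^esub>"
  using assms(2,3)
proof (induction xs arbitrary: as)
  case Nil then show ?case by (cases as) auto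
next
  case (Cons x xs)
  interpret Xm: abelian_group Xm using lm_ag[OF assms(1)] .
  show ?case using Cons lm_zero_smult[OF assms(1)] by (cases as) auto
qed

lemma lc_add: assumes "left_module Rg Xm" "set xs \<subseteq> carrier Xm" "set as \<subseteq> carrier Rg"
   "set bs \<subseteq> carrier Rg" "length as = length xs" "length bs = length xs"
  shows "lc Xm (map2 (\<oplus>\<^bsub>Rg\<^esub>) as bs) xs = lc Xm as xs \<oplus>\<^bsub>Xm\<^esub> lc Xm bs xs"
  using assms(2-)
proof (induction xs arbitrary: as bs)
  case Nil
  interpret Xm: abelian_group Xm using lm_ag[OF assms(1)] .
  show ?case using Nil by simp
next
  case (Cons x xs)
  interpret Xm: abelian_group Xm using lm_ag[OF assms(1)] .
  obtain a as' where a: "as = a # as'" using Cons by (cases as) auto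
  obtain b bs' where b: "bs = b # bs'" using Cons by (cases bs) auto
  have c1: "lc Xm as' xs \<in> carrier Xm" "lc Xm bs' xs \<in> carrier Xm"
    using lc_in_sub[OF assms(1) carrier_sub[OF assms(1)]] Cons a b by auto
  have c2: "a \<odot>\<^bsub>Xm\<^esub> x \<in> carrier Xm" "b \<odot>\<^bsub>Xm\<^esub> x \<in> carrier Xm"
    using lm_closed[OF assms(1)] Cons a b by auto
  show ?case using Cons.IH[of as' bs'] Cons.prems a b c1 c2 lm_ldist[OF assms(1), of a b x]
    by (simp add: Xm.a_ac)
qed

lemma lc_smult: assumes "left_module Rg Xm" "set xs \<subseteq> carrier Xm" "set as \<subseteq> carrier Rg"
   "c \<in> carrier Rg"
  shows "lc Xm (map ((\<otimes>\<^bsub>Rg\<^esub>) c) as) xs = c \<odot>\<^bsub>Xm\<^esub> lc Xm as xs"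
  using assms(2,3)
proof (induction xs arbitrary: as)
  case Nil
  then show ?case using lm_smult_zero[OF assms(1,4)] by (cases as) auto
next
  case (Cons x xs)
  show ?case
  proof (cases as)
    case Nil then show ?thesis using lm_smult_zero[OF assms(1,4)] by simp
  next
    case (Cons a as')
    have c1: "lc Xm as' xs \<in> carrier Xm"
      using lc_in_sub[OF assms(1) carrier_sub[OF assms(1)]] Cons.prems Cons by auto
    have c2: "a \<odot>\<^bsub>Xm\<^esub> x \<in> carrier Xm"
      using lm_closed[OF assms(1)] Cons.prems Cons by auto
    show ?thesis using Cons.IH[of as'] Cons.prems Cons c1 c2 lm_rdist[OF assms(1) assms(4)]
      lm_assoc[OF assms(1) assms(4), of a x] by simp
  qed
qed

lemma span_sub: assumes "left_module Rg Xm" "set xs \<subseteq> carrier Xm"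
  shows "lsubmodule Rg Xm (span Rg Xm xs)"
proof -
  interpret Xm: abelian_group Xm using lm_ag[OF assms(1)] .
  interpret Rg: ring Rg using lm_ring[OF assms(1)] .
  have cl: "\<And>as. set as \<subseteq> carrier Rg \<Longrightarrow> lc Xm as xs \<in> carrier Xm"
    using lc_in_sub[OF assms(1) carrier_sub[OF assms(1)] assms(2)] by blast
  have z: "lc Xm (replicate (length xs) \<zero>\<^bsub>Rg\<^esub>) xs = \<zero>\<^bsub>Xm\<^esub>"
    by (rule lc_zero[OF assms(1,2)]) auto
  have "\<zero>\<^bsub>Xm\<^esub> \<in> span Rg Xm xs"
    unfolding span_def
    by (rule CollectI, rule exI[of _ "replicate (length xs) \<zero>\<^bsub>Rg\<^esub>"])
       (use z in auto)
  moreover have "x \<oplus>\<^bsub>Xm\<^esub> y \<in> span Rg Xm xs" if xin: "x \<in> span Rg Xm xs" and yin: "y \<in> span Rg Xm xs" for x y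
  proof -
    obtain as where as: "x = lc Xm as xs" "length as = length xs" "set as \<subseteq> carrier Rg"
      using xin unfolding span_def by blast
    obtain bs where bs: "y = lc Xm bs xs" "length bs = length xs" "set bs \<subseteq> carrier Rg"
      using yin unfolding span_def by blast
    have "set (map2 (\<oplus>\<^bsub>Rg\<^esub>) as bs) \<subseteq> carrier Rg"
      using as bs by (auto dest!: set_zip_leftD set_zip_rightD simp: set_zip) (metis Rg.add.m_closed nth_mem subsetD)
    then show ?thesis unfolding span_def using as bs lc_add[OF assms(1,2), of as bs]
      by (intro CollectI exI[of _ "map2 (\<oplus>\<^bsub>Rg\<^esub>) as bs"]) auto
  qed
  moreover have "\<ominus>\<^bsub>Xm\<^esub> x \<in> span Rg Xm xs" if xin: "x \<in> span Rg Xm xs" for x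
  proof -
    obtain as where as: "x = lc Xm as xs" "length as = length xs" "set as \<subseteq> carrier Rg"
      using xin unfolding span_def by blast
    let ?bs = "map (a_inv Rg) as"
    have bs: "set ?bs \<subseteq> carrier Rg" "length ?bs = length xs" using as by auto
    have "map2 (\<oplus>\<^bsub>Rg\<^esub>) ?bs as = map (\<lambda>_. \<zero>\<^bsub>Rg\<^esub>) as"
      using as(3) by (induction as) (auto simp: Rg.l_neg)
    then have "lc Xm ?bs xs \<oplus>\<^bsub>Xm\<^esub> lc Xm as xs = \<zero>\<^bsub>Xm\<^esub>"
      using lc_add[OF assms(1,2) bs(1) as(3) bs(2) as(2)] lc_zero[OF assms(1,2), of "map (\<lambda>_. \<zero>\<^bsub>Rg\<^esub>) as"]
      by auto
    then have "\<ominus>\<^bsub>Xm\<^esub> x = lc Xm ?bs xs" using as cl bs by (intro Xm.minus_equality) auto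
    then show ?thesis unfolding span_def using bs by blast
  qed
  moreover have "c \<odot>\<^bsub>Xm\<^esub> x \<in> span Rg Xm xs" if xin: "x \<in> span Rg Xm xs" and cin: "c \<in> carrier Rg" for x c
  proof -
    obtain as where as: "x = lc Xm as xs" "length as = length xs" "set as \<subseteq> carrier Rg"
      using xin unfolding span_def by blast
    show ?thesis unfolding span_def using as cin lc_smult[OF assms(1,2) as(3) cin]
      by (intro CollectI exI[of _ "map ((\<otimes>\<^bsub>Rg\<^esub>) c) as"]) auto
  qed
  moreover have "span Rg Xm xs \<subseteq> carrier Xm" unfolding span_def using cl by blast
  ultimately show ?thesis unfolding lsubmodule_def by blast
qed

lemma span_in: assumes "left_module Rg Xm" "lsubmodule Rg Xm U" "set xs \<subseteq> U"
  shows "span Rg Xm xs \<subseteq> U"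
  using lc_in_sub[OF assms] unfolding span_def by blast

lemma span_mono: assumes "left_module Rg Xm" "set (x # xs) \<subseteq> carrier Xm"
  shows "span Rg Xm xs \<subseteq> span Rg Xm (x # xs)" "x \<in> span Rg Xm (x # xs)"
proof -
  interpret Xm: abelian_group Xm using lm_ag[OF assms(1)] .
  interpret Rg: ring Rg using lm_ring[OF assms(1)] .
  have cl: "\<And>as. set as \<subseteq> carrier Rg \<Longrightarrow> lc Xm as xs \<in> carrier Xm"
    using lc_in_sub[OF assms(1) carrier_sub[OF assms(1)]] assms(2) by auto
  show "span Rg Xm xs \<subseteq> span Rg Xm (x # xs)"
  proof
    fix y assume "y \<in> span Rg Xm xs"
    then obtain as where as: "y = lc Xm as xs" "length as = length xs" "set as \<subseteq> carrier Rg"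
      unfolding span_def by blast
    have "lc Xm (\<zero>\<^bsub>Rg\<^esub> # as) (x # xs) = y" using as cl assms lm_zero_smult[OF assms(1), of x] by simp
    then show "y \<in> span Rg Xm (x # xs)" unfolding span_def using as
      by (intro CollectI exI[of _ "\<zero>\<^bsub>Rg\<^esub> # as"]) auto
  qed
  have z: "lc Xm (replicate (length xs) \<zero>\<^bsub>Rg\<^esub>) xs = \<zero>\<^bsub>Xm\<^esub>"
    by (rule lc_zero[OF assms(1)]) (use assms in auto)
  have "lc Xm (\<one>\<^bsub>Rg\<^esub> # replicate (length xs) \<zero>\<^bsub>Rg\<^esub>) (x # xs) = x"
    using assms lm_one[OF assms(1)] z by auto
  then show "x \<in> span Rg Xm (x # xs)" unfolding span_def
    by (intro CollectI exI[of _ "\<one>\<^bsub>Rg\<^esub> # replicate (length xs) \<zero>\<^bsub>Rg\<^esub>"]) auto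
qed

primrec gseq :: "('a list \<Rightarrow> 'a set) \<Rightarrow> 'a set \<Rightarrow> nat \<Rightarrow> 'a list" where
  "gseq S U 0 = []"
| "gseq S U (Suc n) = (SOME x. x \<in> U - S (gseq S U n)) # gseq S U n"

lemma fin_gen: fixes Xm :: "('r, 'a) module" and Rg :: "('r, 'c) ring_scheme"
  assumes "fin_length Rg Xm" "lsubmodule Rg Xm U"
  shows "\<exists>xs. set xs \<subseteq> U \<and> span Rg Xm xs = U"
proof (rule ccontr)
  assume H: "\<not> ?thesis"
  have lm: "left_module Rg Xm" using assms(1) by (simp add: fin_length_def)
  obtain n where n: "\<And>(C :: nat \<Rightarrow> 'a set) m. (\<forall>i\<le>m. lsubmodule Rg Xm (C i)) \<and> (\<forall>i<m. C i \<subset> C (Suc i)) \<Longrightarrow> m \<le> n"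
    using assms(1) unfolding fin_length_def by blast
  let ?S = "span Rg Xm" let ?g = "gseq ?S U"
  have UX: "U \<subseteq> carrier Xm" using assms(2) by (simp add: lsubmodule_def)
  have P: "set (?g i) \<subseteq> U" for i
  proof (induction i)
    case (Suc i)
    then have "?S (?g i) \<subset> U" using H span_in[OF lm assms(2)] by blast
    then have ex: "\<exists>x. x \<in> U - ?S (?g i)" by blast
    show ?case using Suc someI_ex[OF ex] by auto
  qed simp
  have Q: "?S (?g i) \<subset> ?S (?g (Suc i))" for i
  proof -
    have "?S (?g i) \<subset> U" using H span_in[OF lm assms(2)] P by blast
    then have ex: "\<exists>x. x \<in> U - ?S (?g i)" by blast
    have s: "(SOME x. x \<in> U - ?S (?g i)) \<in> U - ?S (?g i)" using someI_ex[OF ex] .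
    then have "set (?g (Suc i)) \<subseteq> carrier Xm" using P[of i] UX by auto
    then show ?thesis using span_mono[OF lm, of "SOME x. x \<in> U - ?S (?g i)" "?g i"] s by auto
  qed
  have "Suc n \<le> n"
    by (rule n[where C="\<lambda>i. ?S (?g i)"]) (use Q span_sub[OF lm] P UX in blast)
  then show False by simp
qed

lemma fin_len_inj: fixes Xm :: "('r, 'a) module" and Rg :: "('r, 'c) ring_scheme"
  assumes "fin_length Rg Xm" "lsubmodule Rg Xm U"
  shows "\<exists>e :: 'a \<Rightarrow> 'r list. inj_on e U"
proof -
  obtain xs where xs: "set xs \<subseteq> U" "span Rg Xm xs = U" using fin_gen[OF assms] by blast
  define e where "e u = (SOME as. length as = length xs \<and> set as \<subseteq> carrier Rg \<and> lc Xm as xs = u)" for u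
  have "lc Xm (e u) xs = u" if "u \<in> U" for u
  proof -
    have "\<exists>as. length as = length xs \<and> set as \<subseteq> carrier Rg \<and> lc Xm as xs = u"
      using that xs(2) unfolding span_def by auto
    from someI_ex[OF this] show ?thesis unfolding e_def by blast
  qed
  then have "inj_on e U" by (metis inj_onI)
  then show ?thesis by blast
qed


definition tmod :: "('r, 'a) module \<Rightarrow> 'a set \<Rightarrow> ('a \<Rightarrow> 'b) \<Rightarrow> ('r, 'b) module" where
  "tmod Xm U e = \<lparr>carrier = e ` U, monoid.mult = (\<lambda>_ _. undefined), one = undefined,
     ring.zero = e \<zero>\<^bsub>Xm\<^esub>,
     ring.add = (\<lambda>z w. e (inv_into U e z \<oplus>\<^bsub>Xm\<^esub> inv_into U e w)),
     smult = (\<lambda>a z. e (a \<odot>\<^bsub>Xm\<^esub> inv_into U e z))\<rparr>"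

lemma tmod_c:
  "carrier (tmod Xm U e) = e ` U"
  "\<zero>\<^bsub>tmod Xm U e\<^esub> = e \<zero>\<^bsub>Xm\<^esub>"
  by (simp_all add: tmod_def)

lemma tmod_ops:
  "inj_on e U \<Longrightarrow> u \<in> U \<Longrightarrow> v \<in> U \<Longrightarrow> e u \<oplus>\<^bsub>tmod Xm U e\<^esub> e v = e (u \<oplus>\<^bsub>Xm\<^esub> v)"
  "inj_on e U \<Longrightarrow> u \<in> U \<Longrightarrow> a \<odot>\<^bsub>tmod Xm U e\<^esub> e u = e (a \<odot>\<^bsub>Xm\<^esub> u)"
  by (simp_all add: tmod_def)

lemma tmod_lm: assumes lm: "left_module Rg Xm" and sub: "lsubmodule Rg Xm U" and inj: "inj_on e U"
  shows "left_module Rg (tmod Xm U e)" "abelian_group (tmod Xm U e)"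
    "\<And>u. u \<in> U \<Longrightarrow> \<ominus>\<^bsub>tmod Xm U e\<^esub> (e u) = e (\<ominus>\<^bsub>Xm\<^esub> u)"
proof -
  interpret Xm: abelian_group Xm using lm_ag[OF lm] .
  interpret Rg: ring Rg using lm_ring[OF lm] .
  let ?Z = "tmod Xm U e"
  have UX: "U \<subseteq> carrier Xm" and z: "\<zero>\<^bsub>Xm\<^esub> \<in> U" and ad: "\<And>x y. x \<in> U \<Longrightarrow> y \<in> U \<Longrightarrow> x \<oplus>\<^bsub>Xm\<^esub> y \<in> U"
    and ng: "\<And>x. x \<in> U \<Longrightarrow> \<ominus>\<^bsub>Xm\<^esub> x \<in> U"
    and sm: "\<And>a x. a \<in> carrier Rg \<Longrightarrow> x \<in> U \<Longrightarrow> a \<odot>\<^bsub>Xm\<^esub> x \<in> U"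
    using sub unfolding lsubmodule_def by auto
  note ts = tmod_ops[OF inj] tmod_c
  have ag: "abelian_group ?Z"
  proof (rule abelian_groupI, goal_cases)
    case (1 x y) then show ?case using ad by (auto simp: ts)
  next
    case 2 then show ?case using z by (auto simp: ts)
  next
    case (3 x y z) then show ?case using ad UX by (auto simp: ts Xm.a_ac subsetD)
  next
    case (4 x y) then show ?case using ad UX by (auto simp: ts Xm.a_ac subsetD)
  next
    case (5 x) then show ?case using z UX by (auto simp: ts subsetD)
  next
    case (6 x)
    then obtain u where u: "u \<in> U" "x = e u" by (auto simp: ts)
    show ?case using u ng UX
      by (intro bexI[of _ "e (\<ominus>\<^bsub>Xm\<^esub> u)"]) (auto simp: ts Xm.l_neg subsetD)
  qed
  then show "abelian_group ?Z" .
  interpret Z: abelian_group ?Z by (rule ag)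
  show "\<ominus>\<^bsub>?Z\<^esub> (e u) = e (\<ominus>\<^bsub>Xm\<^esub> u)" if "u \<in> U" for u
    using that ng UX by (intro Z.minus_equality) (auto simp: ts Xm.l_neg subsetD)
  show "left_module Rg ?Z"
    unfolding left_module_def
    using ag Rg.ring_axioms sm UX ad
    by (auto simp: ts lm_ldist[OF lm] lm_rdist[OF lm] lm_assoc[OF lm] lm_one[OF lm] subsetD)
qed

lemma tmod_fin: fixes Xm :: "('r, 'a) module" and Rg :: "('r, 'c) ring_scheme" and e :: "'a \<Rightarrow> 'b"
  assumes fl: "fin_length Rg Xm" and sub: "lsubmodule Rg Xm U" and inj: "inj_on e U"
  shows "fin_length Rg (tmod Xm U e)"
proof -
  have lm: "left_module Rg Xm" using fl by (simp add: fin_length_def)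
  let ?Z = "tmod Xm U e" let ?d = "inv_into U e"
  obtain n where n: "\<And>(C :: nat \<Rightarrow> 'a set) m. (\<forall>i\<le>m. lsubmodule Rg Xm (C i)) \<and> (\<forall>i<m. C i \<subset> C (Suc i)) \<Longrightarrow> m \<le> n"
    using fl unfolding fin_length_def by blast
  note ts = tmod_ops[OF inj] tmod_c
  have UX: "U \<subseteq> carrier Xm" and z: "\<zero>\<^bsub>Xm\<^esub> \<in> U" and ad: "\<And>x y. x \<in> U \<Longrightarrow> y \<in> U \<Longrightarrow> x \<oplus>\<^bsub>Xm\<^esub> y \<in> U"
    and ng: "\<And>x. x \<in> U \<Longrightarrow> \<ominus>\<^bsub>Xm\<^esub> x \<in> U"
    and sm: "\<And>a x. a \<in> carrier Rg \<Longrightarrow> x \<in> U \<Longrightarrow> a \<odot>\<^bsub>Xm\<^esub> x \<in> U"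
    using sub unfolding lsubmodule_def by auto
  have de: "\<And>u. u \<in> U \<Longrightarrow> ?d (e u) = u" using inj by (simp add: inv_into_f_f)
  have injd: "inj_on ?d (carrier ?Z)" using inj by (simp add: ts inj_on_inv_into)
  have S: "lsubmodule Rg Xm (?d ` C)" if "lsubmodule Rg ?Z C" for C
  proof -
    have C: "C \<subseteq> e ` U" "e \<zero>\<^bsub>Xm\<^esub> \<in> C" "\<And>x y. x \<in> C \<Longrightarrow> y \<in> C \<Longrightarrow> x \<oplus>\<^bsub>?Z\<^esub> y \<in> C"
      "\<And>x. x \<in> C \<Longrightarrow> \<ominus>\<^bsub>?Z\<^esub> x \<in> C" "\<And>a x. a \<in> carrier Rg \<Longrightarrow> x \<in> C \<Longrightarrow> a \<odot>\<^bsub>?Z\<^esub> x \<in> C"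
      using that unfolding lsubmodule_def by (auto simp: ts)
    have "?d ` C \<subseteq> carrier Xm" using C(1) UX de by fastforce
    moreover have "\<zero>\<^bsub>Xm\<^esub> \<in> ?d ` C" using C(2) de z by force
    moreover have "x \<oplus>\<^bsub>Xm\<^esub> y \<in> ?d ` C" if xy: "x \<in> ?d ` C" "y \<in> ?d ` C" for x y
    proof -
      obtain u v where "u \<in> U" "v \<in> U" "e u \<in> C" "e v \<in> C" "x = u" "y = v"
        using xy C(1) de by force
      then show ?thesis using C(3)[of "e u" "e v"] ts ad de by (metis image_eqI)
    qed
    moreover have "\<ominus>\<^bsub>Xm\<^esub> x \<in> ?d ` C" if xy: "x \<in> ?d ` C" for x
    proof -
      obtain u where "u \<in> U" "e u \<in> C" "x = u"
        using xy C(1) de by force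
      then show ?thesis using C(4)[of "e u"] tmod_lm(3)[OF lm sub inj] ng de by (metis image_eqI)
    qed
    moreover have "a \<odot>\<^bsub>Xm\<^esub> x \<in> ?d ` C" if xy: "x \<in> ?d ` C" and ain: "a \<in> carrier Rg" for x a
    proof -
      obtain u where "u \<in> U" "e u \<in> C" "x = u"
        using xy C(1) de by force
      then show ?thesis using C(5)[of a "e u"] ain ts sm de by (metis image_eqI)
    qed
    ultimately show ?thesis unfolding lsubmodule_def by blast
  qed
  have "m \<le> n" if "\<forall>i\<le>m. lsubmodule Rg ?Z (C i)" "\<forall>i<m. C i \<subset> C (Suc i)" for C m
  proof (rule n[where C="\<lambda>i. ?d ` C i"], intro conjI allI impI)
    fix i assume "i \<le> m" then show "lsubmodule Rg Xm (?d ` C i)" using S that by blast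
  next
    fix i assume i: "i < m"
    have "C i \<subseteq> carrier ?Z" "C (Suc i) \<subseteq> carrier ?Z" using that i unfolding lsubmodule_def
      by (meson Suc_leI less_imp_le)+
    then show "?d ` C i \<subset> ?d ` C (Suc i)"
      using that(2) i injd by (meson image_strict_mono inj_on_subset)
  qed
  then show ?thesis unfolding fin_length_def using tmod_lm(1)[OF lm sub inj] by blast
qed


theorem lemma2p2:
  fixes k :: "'k ring" and L :: "'r ring" and \<phi> :: "'k \<Rightarrow> 'r"
    and Xm :: "('r, 'a) module" and Ym :: "('r, 'b) module" and M :: "('a \<times> 'b) set"
  assumes "artin_algebra k L \<phi>"
    and "fin_length L Xm" and "fin_length L Ym"
    and "lsubmodule L (dsum Xm Ym) M"
  shows "\<exists>Xs Ys. lsubmodule L Xm Xs \<and> lsubmodule L Ym Ys \<and>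
           deg_le L ((dsum Xm Ym)\<lparr>carrier := M\<rparr>) (dsum (Xm\<lparr>carrier := Xs\<rparr>) (Ym\<lparr>carrier := Ys\<rparr>))"
proof -
  have lmX: "left_module L Xm" and lmY: "left_module L Ym" using assms(2,3) by (auto simp: fin_length_def)
  interpret X: abelian_group Xm using lm_ag[OF lmX] .
  interpret Y: abelian_group Ym using lm_ag[OF lmY] .
  have MC: "M \<subseteq> carrier Xm \<times> carrier Ym" and M0: "(\<zero>\<^bsub>Xm\<^esub>, \<zero>\<^bsub>Ym\<^esub>) \<in> M"
    and Madd: "\<And>x y. x \<in> M \<Longrightarrow> y \<in> M \<Longrightarrow> (fst x \<oplus>\<^bsub>Xm\<^esub> fst y, snd x \<oplus>\<^bsub>Ym\<^esub> snd y) \<in> M"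
    and Mneg: "\<And>x. x \<in> M \<Longrightarrow> \<ominus>\<^bsub>dsum Xm Ym\<^esub> x \<in> M"
    and Msm: "\<And>a x. a \<in> carrier L \<Longrightarrow> x \<in> M \<Longrightarrow> (a \<odot>\<^bsub>Xm\<^esub> fst x, a \<odot>\<^bsub>Ym\<^esub> snd x) \<in> M"
    using assms(4) unfolding lsubmodule_def by auto
  have Mneg': "(\<ominus>\<^bsub>Xm\<^esub> x, \<ominus>\<^bsub>Ym\<^esub> y) \<in> M" if "(x, y) \<in> M" for x y
    using Mneg[OF that] dsum_inv[OF lm_ag[OF lmX] lm_ag[OF lmY]] that MC by auto
  define U where "U = {x \<in> carrier Xm. (x, \<zero>\<^bsub>Ym\<^esub>) \<in> M}"
  define V where "V = snd ` M"
  have nz: "\<ominus>\<^bsub>Ym\<^esub> \<zero>\<^bsub>Ym\<^esub> = \<zero>\<^bsub>Ym\<^esub>" by (rule Y.minus_equality) auto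
  have subU: "lsubmodule L Xm U"
    unfolding lsubmodule_def U_def
    using M0 Madd[of "(_, \<zero>\<^bsub>Ym\<^esub>)" "(_, \<zero>\<^bsub>Ym\<^esub>)"] Mneg' Msm[of _ "(_, \<zero>\<^bsub>Ym\<^esub>)"]
      lm_smult_zero[OF lmY] lm_closed[OF lmX]
    by (auto, metis nz)
  have subV: "lsubmodule L Ym V"
  proof -
    have "V \<subseteq> carrier Ym" using MC unfolding V_def by auto
    moreover have "\<zero>\<^bsub>Ym\<^esub> \<in> V" using M0 unfolding V_def by force
    moreover have "x \<oplus>\<^bsub>Ym\<^esub> y \<in> V" if "x \<in> V" "y \<in> V" for x y
      using that Madd unfolding V_def by (force intro: image_eqI)
    moreover have "\<ominus>\<^bsub>Ym\<^esub> x \<in> V" if "x \<in> V" for x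
      using that Mneg' unfolding V_def by (force intro: image_eqI)
    moreover have "a \<odot>\<^bsub>Ym\<^esub> x \<in> V" if "x \<in> V" "a \<in> carrier L" for x a
      using that Msm unfolding V_def by (force intro: image_eqI)
    ultimately show ?thesis unfolding lsubmodule_def by blast
  qed
  obtain e :: "'a \<Rightarrow> 'r list" where inj: "inj_on e U" using fin_len_inj[OF assms(2) subU] by blast
  define Z where "Z = tmod Xm U e"
  let ?d = "inv_into U e"
  have de: "\<And>u. u \<in> U \<Longrightarrow> ?d (e u) = u" using inj by (simp add: inv_into_f_f)
  have finZ: "fin_length L Z" unfolding Z_def by (rule tmod_fin[OF assms(2) subU inj])
  note ts = tmod_ops[where Xm=Xm, OF inj, folded Z_def] tmod_c[of Xm U e, folded Z_def]
  have UX: "U \<subseteq> carrier Xm" and z: "\<zero>\<^bsub>Xm\<^esub> \<in> U" and ad: "\<And>x y. x \<in> U \<Longrightarrow> y \<in> U \<Longrightarrow> x \<oplus>\<^bsub>Xm\<^esub> y \<in> U"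
    and sm: "\<And>a x. a \<in> carrier L \<Longrightarrow> x \<in> U \<Longrightarrow> a \<odot>\<^bsub>Xm\<^esub> x \<in> U"
    using subU unfolding lsubmodule_def by auto
  have UM: "u \<in> U \<Longrightarrow> (u, \<zero>\<^bsub>Ym\<^esub>) \<in> M" for u unfolding U_def by auto
  define MM where "MM = (dsum Xm Ym)\<lparr>carrier := M\<rparr>"
  define N where "N = dsum (Xm\<lparr>carrier := U\<rparr>) (Ym\<lparr>carrier := V\<rparr>)"
  define f where "f z = ((?d z, \<zero>\<^bsub>Ym\<^esub>), \<zero>\<^bsub>Z\<^esub>)" for z
  define g where "g w = (?d (snd w), snd (fst w))" for w :: "('a \<times> 'b) \<times> 'r list"
  have cMZ: "carrier (dsum MM Z) = M \<times> e ` U" by (simp add: MM_def ts)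
  have h1: "lmod_hom L Z (dsum MM Z) f"
    unfolding lmod_hom_def
  proof (intro conjI ballI)
    show "f \<in> carrier Z \<rightarrow> carrier (dsum MM Z)" unfolding cMZ using UM z by (auto simp: ts f_def de)
  next
    fix x y assume "x \<in> carrier Z" "y \<in> carrier Z"
    then obtain u v where uv: "u \<in> U" "v \<in> U" "x = e u" "y = e v" by (auto simp: ts)
    show "f (x \<oplus>\<^bsub>Z\<^esub> y) = f x \<oplus>\<^bsub>dsum MM Z\<^esub> f y"
      using uv ad z by (simp add: f_def ts de MM_def)
  next
    fix a x assume "a \<in> carrier L" "x \<in> carrier Z"
    then obtain u where u: "a \<in> carrier L" "u \<in> U" "x = e u" by (auto simp: ts)
    show "f (a \<odot>\<^bsub>Z\<^esub> x) = a \<odot>\<^bsub>dsum MM Z\<^esub> f x"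
      using u sm z by (simp add: f_def ts de MM_def lm_smult_zero[OF lmX] lm_smult_zero[OF lmY])
  qed
  have h2: "inj_on f (carrier Z)"
    by (rule inj_onI) (auto simp: f_def ts de)
  have h3: "lmod_hom L (dsum MM Z) N g"
    unfolding lmod_hom_def
  proof (intro conjI ballI)
    show "g \<in> carrier (dsum MM Z) \<rightarrow> carrier N" unfolding cMZ
      by (auto simp: N_def g_def de V_def) (metis image_eqI snd_conv)
  next
    fix x y assume "x \<in> carrier (dsum MM Z)" "y \<in> carrier (dsum MM Z)"
    then obtain m1 m2 u v where uv: "u \<in> U" "v \<in> U" "x = (m1, e u)" "y = (m2, e v)" unfolding cMZ by blast
    show "g (x \<oplus>\<^bsub>dsum MM Z\<^esub> y) = g x \<oplus>\<^bsub>N\<^esub> g y"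
      using uv ad by (simp add: g_def ts de MM_def N_def)
  next
    fix a x assume "a \<in> carrier L" "x \<in> carrier (dsum MM Z)"
    then obtain m u where u: "a \<in> carrier L" "u \<in> U" "x = (m, e u)" unfolding cMZ by blast
    show "g (a \<odot>\<^bsub>dsum MM Z\<^esub> x) = a \<odot>\<^bsub>N\<^esub> g x"
      using u sm by (simp add: g_def ts de MM_def N_def)
  qed
  have h4: "g ` carrier (dsum MM Z) = carrier N"
  proof
    show "g ` carrier (dsum MM Z) \<subseteq> carrier N" using h3 unfolding lmod_hom_def by blast
    show "carrier N \<subseteq> g ` carrier (dsum MM Z)"
    proof
      fix w assume "w \<in> carrier N"
      then obtain u m where "u \<in> U" "m \<in> M" "w = (u, snd m)" by (auto simp: N_def V_def)
      then show "w \<in> g ` carrier (dsum MM Z)"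
        by (intro image_eqI[of _ _ "(m, e u)"]) (auto simp: g_def de MM_def ts)
    qed
  qed
  have h5: "f ` carrier Z = {w \<in> carrier (dsum MM Z). g w = \<zero>\<^bsub>N\<^esub>}"
  proof
    show "f ` carrier Z \<subseteq> {w \<in> carrier (dsum MM Z). g w = \<zero>\<^bsub>N\<^esub>}"
      using UM z by (auto simp: f_def g_def ts de MM_def N_def)
  next
    show "{w \<in> carrier (dsum MM Z). g w = \<zero>\<^bsub>N\<^esub>} \<subseteq> f ` carrier Z"
    proof
      fix w assume w: "w \<in> {w \<in> carrier (dsum MM Z). g w = \<zero>\<^bsub>N\<^esub>}"
      then obtain x y u where xyu: "(x, y) \<in> M" "u \<in> U" "w = ((x, y), e u)" unfolding cMZ by auto
      have "u = \<zero>\<^bsub>Xm\<^esub>" "y = \<zero>\<^bsub>Ym\<^esub>" using w xyu by (auto simp: g_def N_def de)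
      then have xU: "x \<in> U" using xyu MC unfolding U_def by auto
      have "w = f (e x)" using xyu xU \<open>u = _\<close> \<open>y = _\<close> by (simp add: f_def de ts)
      then show "w \<in> f ` carrier Z" using xU by (auto simp: ts)
    qed
  qed
  have "deg_le L MM N"
    unfolding deg_le_def using finZ h1 h2 h3 h4 h5 by blast
  then show ?thesis using subU subV unfolding MM_def N_def by blast
qed

end
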